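(* Let $0\le\alpha<\pi/2$ and let $H\in\mathbb{M}_n(\mathbb{M}_k)$ satisfy $W(H)\subseteq S_\alpha$. Then \[ \left|\frac{\det(\mathrm{tr}_1 H)}{n^k}\right|^n \ge (\cos\alpha)^{nk}\,|\det H|. \]
   Context: $\mathbb{M}_n(\mathbb{M}_k)$ denotes the set of $nk\times nk$ complex matrices partitioned as $H=[H_{i,j}]_{i,j=1}^n$ with each block $H_{i,j}$ a $k\times k$ complex matrix. The first partial trace is $\mathrm{tr}_1 H=\sum_{i=1}^n H_{i,i}\in\mathbb{M}_k$. The numerical range of $A\in\mathbb{M}_p$ is $W(A)=\{x^*Ax: x\in\mathbb{C}^p, x^*x=1\}$. For $\alpha\in[0,\pi/2)$, $S_\alpha=\{z\in\mathbb{C}: \Re z>0,\ |\Im z|\le (\Re z)\tan\alpha\}$. *)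

theory Defs
  imports Complex_Main "Jordan_Normal_Form.Matrix" "Jordan_Normal_Form.Determinant"
begin

text \<open>Numerical range of a square complex matrix A of size p:
  W(A) = { x^* A x : x in C^p, x^* x = 1 }.  Here (mult_mat_vec A x) \<bullet>c x = x^* A x.\<close>
definition numerical_range :: "complex mat \<Rightarrow> complex set" where
  "numerical_range A = {(mult_mat_vec A x) \<bullet>c x | x. x \<in> carrier_vec (dim_col A) \<and> x \<bullet>c x = 1}"

definition sector :: "real \<Rightarrow> complex set" where
  "sector \<alpha> = {z. Re z > 0 \<and> \<bar>Im z\<bar> \<le> Re z * tan \<alpha>}"

text \<open>First partial trace of H in M_n(M_k), viewed as an (n*k) x (n*k) matrix whose
  (i,j) block (0-based) occupies rows i*k..i*k+k-1 and columns j*k..j*k+k-1: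
  tr_1 H = sum_{i<n} H_{i,i}.\<close>
definition partial_trace1 :: "nat \<Rightarrow> nat \<Rightarrow> complex mat \<Rightarrow> complex mat" where
  "partial_trace1 n k H = mat k k (\<lambda>(a, b). \<Sum>i<n. H $$ (i * k + a, i * k + b))"

end

theory Submission
  imports Defs "Jordan_Normal_Form.Schur_Decomposition"
begin


definition qf :: "complex mat \<Rightarrow> complex vec \<Rightarrow> complex" where
  "qf A v = (A *\<^sub>v v) \<bullet>c v"

lemma qf_idx: assumes "A \<in> carrier_mat p p" "v \<in> carrier_vec p"
  shows "qf A v = (\<Sum>i<p. \<Sum>j<p. A$$(i,j) * v$j * cnj (v$i))"
  using assms unfolding qf_def
  by (auto simp: scalar_prod_def atLeast0LessThan sum_distrib_right intro!: sum.cong)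

lemma zcnj: "z * cnj z = (complex_of_real (cmod z))^2"
  by (metis complex_norm_square of_real_power)

lemma norm_idx: assumes "v \<in> carrier_vec p"
  shows "v \<bullet>c v = of_real (\<Sum>i<p. (cmod (v$i))^2)"
  using assms by (auto simp: scalar_prod_def atLeast0LessThan zcnj of_real_sum intro!: sum.cong)

lemma norm_pos: assumes "v \<in> carrier_vec p" "v \<noteq> 0\<^sub>v p"
  shows "(\<Sum>i<p. (cmod (v$i))^2) > 0"
proof -
  obtain i where i: "i < p" "v$i \<noteq> 0" using assms by (metis eq_vecI carrier_vecD index_zero_vec(1,2))
  have "(cmod (v$i))^2 \<le> (\<Sum>i<p. (cmod (v$i))^2)"
    using i by (intro member_le_sum) auto
  moreover have "(cmod (v$i))^2 > 0" using i by simp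
  ultimately show ?thesis by linarith
qed

lemma qf_eigen: assumes "A \<in> carrier_mat p p" "Q \<in> carrier_mat p p" "v \<in> carrier_vec p"
  and "A *\<^sub>v v = e \<cdot>\<^sub>v (Q *\<^sub>v v)"
  shows "qf A v = e * qf Q v"
  using assms unfolding qf_def by (simp add: smult_scalar_prod_distrib[of _ p])

lemma qf_smult: assumes "A \<in> carrier_mat p p" "v \<in> carrier_vec p"
  shows "qf A (c \<cdot>\<^sub>v v) = (c * cnj c) * qf A v"
  using assms unfolding qf_idx[OF assms] qf_idx[OF assms(1) smult_carrier_vec[THEN iffD2, OF assms(2)]]
  by (auto simp: sum_distrib_left intro!: sum.cong)



lemma sector_scale: assumes "z \<in> sector \<alpha>" "r > 0" shows "of_real r * z \<in> sector \<alpha>"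
proof -
  have "\<bar>r * Im z\<bar> = r * \<bar>Im z\<bar>" using assms(2) by (simp add: abs_mult)
  also have "\<dots> \<le> r * (Re z * tan \<alpha>)" using assms unfolding sector_def by (intro mult_left_mono) auto
  finally show ?thesis using assms unfolding sector_def by (auto simp: mult.assoc)
qed

lemma sector_qf: assumes H: "H \<in> carrier_mat m m" and W: "numerical_range H \<subseteq> sector \<alpha>"
  and v: "v \<in> carrier_vec m" "v \<noteq> 0\<^sub>v m"
  shows "qf H v \<in> sector \<alpha>"
proof -
  define r where "r = (\<Sum>i<m. (cmod (v$i))^2)"
  have r: "r > 0" using norm_pos[OF v] unfolding r_def .
  define c where "c = complex_of_real (1 / sqrt r)"
  define u where "u = c \<cdot>\<^sub>v v"
  have u: "u \<in> carrier_vec m" using v unfolding u_def by auto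
  have "c * cnj c = of_real ((1/sqrt r)^2)" unfolding c_def
    by (simp only: complex_cnj_complex_of_real of_real_mult power2_eq_square)
  hence cc: "c * cnj c = of_real (1 / r)" using r by (simp add: power_divide)
  have "u \<bullet>c u = of_real (\<Sum>i<m. (cmod (u$i))^2)" by (rule norm_idx[OF u])
  also have "(\<Sum>i<m. (cmod (u$i))^2) = (\<Sum>i<m. (1/r) * (cmod (v$i))^2)"
    using v r unfolding u_def c_def by (intro sum.cong) (auto simp: norm_mult power_mult_distrib norm_divide power_divide)
  also have "\<dots> = 1" using r unfolding r_def[symmetric] by (simp add: sum_divide_distrib[symmetric] r_def)
  finally have "u \<bullet>c u = 1" by simp
  hence "qf H u \<in> numerical_range H" unfolding numerical_range_def qf_def using u H by auto
  hence inS: "qf H u \<in> sector \<alpha>" using W by auto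
  have "qf H u = of_real (1/r) * qf H v" unfolding u_def qf_smult[OF H v(1)] cc ..
  hence "qf H v = of_real r * qf H u" using r by simp
  thus ?thesis using sector_scale[OF inS r] by simp
qed

definition herm :: "complex mat \<Rightarrow> complex mat" where
  "herm A = mat (dim_row A) (dim_row A) (\<lambda>(i,j). (A$$(i,j) + cnj (A$$(j,i))) / 2)"

lemma herm_carrier[simp]: "A \<in> carrier_mat p p \<Longrightarrow> herm A \<in> carrier_mat p p"
  unfolding herm_def by auto

lemma qf_herm: assumes A: "A \<in> carrier_mat p p" and v: "v \<in> carrier_vec p"
  shows "qf (herm A) v = of_real (Re (qf A v))"
proof -
  have "qf (herm A) v = (\<Sum>i<p. \<Sum>j<p. ((A$$(i,j) + cnj (A$$(j,i))) / 2) * v$j * cnj (v$i))"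
    using A v unfolding qf_idx[OF herm_carrier[OF A] v] by (intro sum.cong) (auto simp: herm_def)
  also have "\<dots> = (qf A v + (\<Sum>i<p. \<Sum>j<p. cnj (A$$(j,i)) * v$j * cnj (v$i))) / 2"
    unfolding qf_idx[OF A v] by (simp add: sum.distrib sum_divide_distrib[symmetric] algebra_simps)
  also have "(\<Sum>i<p. \<Sum>j<p. cnj (A$$(j,i)) * v$j * cnj (v$i)) = cnj (qf A v)"
    unfolding qf_idx[OF A v] by (subst sum.swap) (simp add: mult.commute mult.left_commute)
  also have "(qf A v + cnj (qf A v)) / 2 = of_real (Re (qf A v))"
    by (simp add: complex_add_cnj)
  finally show ?thesis .
qed


definition mtrace :: "complex mat \<Rightarrow> complex" where
  "mtrace A = (\<Sum>i<dim_row A. A $$ (i,i))"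

lemma mtrace_comm: assumes "A \<in> carrier_mat p q" "B \<in> carrier_mat q p"
  shows "mtrace (A * B) = mtrace (B * A)"
proof -
  have "mtrace (A*B) = (\<Sum>i<p. \<Sum>j<q. A$$(i,j) * B$$(j,i))"
    using assms unfolding mtrace_def by (auto simp: scalar_prod_def atLeast0LessThan intro!: sum.cong)
  also have "\<dots> = (\<Sum>j<q. \<Sum>i<p. B$$(j,i) * A$$(i,j))"
    by (subst sum.swap) (simp add: mult.commute)
  also have "\<dots> = mtrace (B*A)"
    using assms unfolding mtrace_def by (auto simp: scalar_prod_def atLeast0LessThan intro!: sum.cong)
  finally show ?thesis .
qed

lemma eig_decomp:
  fixes A :: "complex mat"
  assumes A: "A \<in> carrier_mat p p"
  shows "\<exists>es. length es = p \<and> det A = prod_list es \<and> mtrace A = sum_list es \<and>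
     (\<forall>e\<in>set es. \<exists>v. v \<in> carrier_vec p \<and> v \<noteq> 0\<^sub>v p \<and> A *\<^sub>v v = e \<cdot>\<^sub>v v)"
proof -
  obtain es where cp: "char_poly A = (\<Prod> a \<leftarrow> es. [:- a, 1:])" and len: "length es = p"
    using char_poly_factorized[OF A] by blast
  obtain B P Q where sd: "schur_decomposition A es = (B,P,Q)" by (cases "schur_decomposition A es") auto
  from schur_decomposition[OF A cp sd] have sim: "similar_mat_wit A B P Q"
    and ut: "upper_triangular B" and dg: "diag_mat B = es" by auto
  from sim A have B: "B \<in> carrier_mat p p" and P: "P \<in> carrier_mat p p" and Q: "Q \<in> carrier_mat p p"
    and QP: "Q * P = 1\<^sub>m p" and APBQ: "A = P * B * Q"
    unfolding similar_mat_wit_def Let_def by auto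
  have "det A = det B" using det_similar sim unfolding similar_mat_def by blast
  also have "\<dots> = prod_list es" using det_upper_triangular[OF ut B] dg by simp
  finally have d: "det A = prod_list es" .
  have "mtrace A = mtrace (P * (B * Q))" using APBQ P B Q by (simp add: assoc_mult_mat)
  also have "\<dots> = mtrace ((B * Q) * P)" using P B Q by (intro mtrace_comm) auto
  also have "\<dots> = mtrace B" using P B Q QP by (simp add: assoc_mult_mat)
  also have "\<dots> = sum_list es" unfolding dg[symmetric] diag_mat_def mtrace_def
    by (simp add: sum_list_sum_nth atLeast0LessThan)
  finally have t: "mtrace A = sum_list es" .
  have "\<forall>e\<in>set es. \<exists>v. v \<in> carrier_vec p \<and> v \<noteq> 0\<^sub>v p \<and> A *\<^sub>v v = e \<cdot>\<^sub>v v"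
  proof
    fix e assume e: "e \<in> set es"
    have "poly (char_poly A) e = 0" unfolding cp poly_prod_list
      using e by (auto simp: prod_list_zero_iff)
    hence "eigenvalue A e" using eigenvalue_root_char_poly[OF A] by blast
    thus "\<exists>v. v \<in> carrier_vec p \<and> v \<noteq> 0\<^sub>v p \<and> A *\<^sub>v v = e \<cdot>\<^sub>v v"
      using A unfolding eigenvalue_def eigenvector_def by auto
  qed
  with len d t show ?thesis by blast
qed

definition pd :: "nat \<Rightarrow> complex mat \<Rightarrow> bool" where
  "pd p Q = (\<forall>v. v \<in> carrier_vec p \<longrightarrow> v \<noteq> 0\<^sub>v p \<longrightarrow> Im (qf Q v) = 0 \<and> Re (qf Q v) > 0)"

lemma cmod_prod_list: "cmod (prod_list es) = prod_list (map cmod es)"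
  by (induct es) (auto simp: norm_mult)

lemma prod_list_ge1: "(\<forall>x\<in>set xs. (1::real) \<le> x) \<Longrightarrow> 1 \<le> prod_list xs"
proof (induct xs)
  case (Cons a xs) thus ?case using mult_mono[of 1 a 1 "prod_list xs"] by simp
qed simp

lemma prod_list_le_pow: "(\<forall>x\<in>set xs. 0 \<le> x \<and> x \<le> (c::real)) \<Longrightarrow> prod_list xs \<le> c ^ length xs"
proof (induct xs)
  case (Cons a xs)
  hence "0 \<le> prod_list xs" by (auto intro: prod_list_nonneg)
  with Cons show ?case by (auto intro: mult_mono)
qed simp

lemma prod_list_real: "(\<forall>e\<in>set es. Im e = 0) \<Longrightarrow> prod_list es = of_real (prod_list (map Re es))"
  by (induct es) (auto simp: complex_eq_iff)

lemma prod_list_pos: "(\<forall>x\<in>set xs. (0::real) < x) \<Longrightarrow> 0 < prod_list xs"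
  by (induct xs) auto

lemma pd_det: assumes Q: "Q \<in> carrier_mat p p" and pd: "pd p Q"
  shows "Im (det Q) = 0 \<and> Re (det Q) > 0"
proof -
  obtain es where len: "length es = p" and d: "det Q = prod_list es"
    and ev: "\<forall>e\<in>set es. \<exists>v. v \<in> carrier_vec p \<and> v \<noteq> 0\<^sub>v p \<and> Q *\<^sub>v v = e \<cdot>\<^sub>v v"
    using eig_decomp[OF Q] by blast
  have epos: "Im e = 0 \<and> Re e > 0" if e: "e \<in> set es" for e
  proof -
    obtain v where v: "v \<in> carrier_vec p" "v \<noteq> 0\<^sub>v p" "Q *\<^sub>v v = e \<cdot>\<^sub>v v" using ev e by blast
    have "Q *\<^sub>v v = e \<cdot>\<^sub>v (1\<^sub>m p *\<^sub>v v)" using v by simp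
    from qf_eigen[OF Q one_carrier_mat v(1) this] have "qf Q v = e * qf (1\<^sub>m p) v" .
    also have "qf (1\<^sub>m p) v = of_real (\<Sum>i<p. (cmod (v$i))^2)" unfolding qf_def using v norm_idx[OF v(1)] by simp
    finally have eq: "qf Q v = e * of_real (\<Sum>i<p. (cmod (v$i))^2)" .
    have s: "(\<Sum>i<p. (cmod (v$i))^2) > 0" using norm_pos[OF v(1,2)] .
    have q: "Im (qf Q v) = 0 \<and> Re (qf Q v) > 0" using pd v unfolding pd_def by blast
    define S where "S = (\<Sum>i<p. (cmod (v$i))^2)"
    have "e = qf Q v / of_real S" unfolding eq S_def[symmetric] using s unfolding S_def[symmetric] by simp
    hence "e = qf Q v / of_real (\<Sum>i<p. (cmod (v$i))^2)" unfolding S_def .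
    with q s show ?thesis by (simp add: Re_divide_of_real Im_divide_of_real)
  qed
  have "det Q = of_real (prod_list (map Re es))" using d prod_list_real epos by auto
  moreover have "prod_list (map Re es) > 0" using epos by (intro prod_list_pos) auto
  ultimately show ?thesis by simp
qed

lemma pd_inv: assumes Q: "Q \<in> carrier_mat p p" and pd: "pd p Q"
  shows "\<exists>Qi \<in> carrier_mat p p. Qi * Q = 1\<^sub>m p \<and> Q * Qi = 1\<^sub>m p"
proof -
  have "det Q \<noteq> 0" using pd_det[OF Q pd] by auto
  from det_non_zero_imp_unit[OF Q this, of "()"] show ?thesis
    unfolding Units_def ring_mat_def by auto
qed

lemma gen_det: assumes P: "P \<in> carrier_mat p p" and Q: "Q \<in> carrier_mat p p" and pd: "pd p Q"
  shows "\<exists>es. length es = p \<and> det P = det Q * prod_list es \<and>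
    (\<forall>e\<in>set es. \<exists>v. v \<in> carrier_vec p \<and> v \<noteq> 0\<^sub>v p \<and> qf P v = e * qf Q v)"
proof -
  obtain Qi where Qi: "Qi \<in> carrier_mat p p" and QiQ: "Qi * Q = 1\<^sub>m p" and QQi: "Q * Qi = 1\<^sub>m p"
    using pd_inv[OF Q pd] by blast
  have M: "Qi * P \<in> carrier_mat p p" using Qi P by auto
  obtain es where len: "length es = p" and d: "det (Qi * P) = prod_list es"
    and ev: "\<forall>e\<in>set es. \<exists>v. v \<in> carrier_vec p \<and> v \<noteq> 0\<^sub>v p \<and> (Qi * P) *\<^sub>v v = e \<cdot>\<^sub>v v"
    using eig_decomp[OF M] by blast
  have "det Q * det (Qi * P) = det (Q * (Qi * P))" using Q Qi P by (simp add: det_mult)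
  also have QQiP: "Q * (Qi * P) = P" by (subst assoc_mult_mat[symmetric, OF Q Qi P]) (simp add: QQi left_mult_one_mat[OF P])
  finally have dP: "det P = det Q * prod_list es" using d by simp
  have "\<exists>v. v \<in> carrier_vec p \<and> v \<noteq> 0\<^sub>v p \<and> qf P v = e * qf Q v" if e: "e \<in> set es" for e
  proof -
    obtain v where v: "v \<in> carrier_vec p" "v \<noteq> 0\<^sub>v p" "(Qi * P) *\<^sub>v v = e \<cdot>\<^sub>v v" using ev e by blast
    have "Q *\<^sub>v ((Qi * P) *\<^sub>v v) = (Q * (Qi * P)) *\<^sub>v v"
      by (rule assoc_mult_mat_vec[symmetric, OF Q M v(1)])
    hence "P *\<^sub>v v = Q *\<^sub>v ((Qi * P) *\<^sub>v v)" using QQiP by simp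
    also have "\<dots> = e \<cdot>\<^sub>v (Q *\<^sub>v v)" using v Q by (simp add: mult_mat_vec)
    finally show ?thesis using qf_eigen[OF P Q v(1)] v by blast
  qed
  with len dP show ?thesis by blast
qed



lemma sector_cmod: assumes a: "0 \<le> \<alpha>" "\<alpha> < pi/2" and z: "z \<in> sector \<alpha>"
  shows "cmod z \<le> Re z / cos \<alpha>"
proof -
  have c: "cos \<alpha> > 0" using a by (intro cos_gt_zero_pi) auto
  have re: "Re z > 0" and im: "\<bar>Im z\<bar> \<le> Re z * tan \<alpha>" using z unfolding sector_def by auto
  have "\<bar>Im z\<bar>^2 \<le> (Re z * tan \<alpha>)^2" by (rule power_mono[OF im abs_ge_zero])
  hence "(Im z)^2 \<le> (Re z * tan \<alpha>)^2" by (simp only: power2_abs)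
  hence "(cmod z)^2 \<le> (Re z)^2 + (Re z * tan \<alpha>)^2" unfolding cmod_power2 by linarith
  also have "\<dots> = (Re z)^2 * (1 + (tan \<alpha>)^2)" by (simp only: power_mult_distrib distrib_left mult_1_right)
  also have "\<dots> = (Re z)^2 * (inverse (cos \<alpha>))^2" using tan_sec[of \<alpha>] c by simp
  also have "\<dots> = (Re z / cos \<alpha>)^2" by (simp only: power_mult_distrib divide_inverse)
  finally have sq: "(cmod z)^2 \<le> (Re z / cos \<alpha>)^2" .
  show ?thesis by (rule power2_le_imp_le[OF sq]) (use re c in simp)
qed

lemma det_bounds: assumes P: "P \<in> carrier_mat p p" and Q: "Q \<in> carrier_mat p p" and pd: "pd p Q"
  and re: "\<forall>v. v \<in> carrier_vec p \<longrightarrow> v \<noteq> 0\<^sub>v p \<longrightarrow> qf Q v = of_real (Re (qf P v))"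
  shows "Re (det Q) \<le> cmod (det P)"
   and "0 \<le> \<alpha> \<Longrightarrow> \<alpha> < pi/2 \<Longrightarrow> (\<forall>v. v \<in> carrier_vec p \<longrightarrow> v \<noteq> 0\<^sub>v p \<longrightarrow> qf P v \<in> sector \<alpha>)
     \<Longrightarrow> cmod (det P) \<le> Re (det Q) * (1 / cos \<alpha>) ^ p"
proof -
  obtain es where len: "length es = p" and d: "det P = det Q * prod_list es"
    and ev: "\<forall>e\<in>set es. \<exists>v. v \<in> carrier_vec p \<and> v \<noteq> 0\<^sub>v p \<and> qf P v = e * qf Q v"
    using gen_det[OF P Q pd] by blast
  have dQ: "Im (det Q) = 0" "Re (det Q) > 0" using pd_det[OF Q pd] by auto
  hence cQ: "cmod (det Q) = Re (det Q)" by (simp add: cmod_eq_Re)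
  have cP: "cmod (det P) = Re (det Q) * prod_list (map cmod es)"
    unfolding d norm_mult cQ cmod_prod_list ..
  have key: "\<exists>v. v \<in> carrier_vec p \<and> v \<noteq> 0\<^sub>v p \<and> Re (qf P v) > 0 \<and> qf P v = e * of_real (Re (qf P v))"
    if e: "e \<in> set es" for e
  proof -
    obtain v where v: "v \<in> carrier_vec p" "v \<noteq> 0\<^sub>v p" "qf P v = e * qf Q v" using ev e by blast
    have q: "qf Q v = of_real (Re (qf P v))" using re v by blast
    have "Re (qf Q v) > 0" using pd v unfolding pd_def by blast
    hence "Re (qf P v) > 0" unfolding q by simp
    moreover from v(3) have "qf P v = e * of_real (Re (qf P v))" unfolding q .
    ultimately show ?thesis using v by blast
  qed
  have "1 \<le> cmod e" if e: "e \<in> set es" for e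
  proof -
    obtain v where v: "Re (qf P v) > 0" "qf P v = e * of_real (Re (qf P v))" using key[OF e] by blast
    have "Re (qf P v) \<le> cmod (qf P v)" by (rule complex_Re_le_cmod)
    also have "cmod (qf P v) = cmod e * Re (qf P v)" using v(1) by (subst v(2)) (simp add: norm_mult)
    finally show ?thesis using v(1) by simp
  qed
  hence "1 \<le> prod_list (map cmod es)" by (intro prod_list_ge1) auto
  thus "Re (det Q) \<le> cmod (det P)" unfolding cP using dQ by simp
  assume a: "0 \<le> \<alpha>" "\<alpha> < pi/2" and sec: "\<forall>v. v \<in> carrier_vec p \<longrightarrow> v \<noteq> 0\<^sub>v p \<longrightarrow> qf P v \<in> sector \<alpha>"
  have c: "cos \<alpha> > 0" using a by (intro cos_gt_zero_pi) auto
  have "cmod e \<le> 1 / cos \<alpha>" if e: "e \<in> set es" for e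
  proof -
    obtain v where v: "v \<in> carrier_vec p" "v \<noteq> 0\<^sub>v p" "Re (qf P v) > 0" "qf P v = e * of_real (Re (qf P v))"
      using key[OF e] by blast
    have "cmod (qf P v) = cmod e * Re (qf P v)" using v(3) by (subst v(4)) (simp add: norm_mult)
    moreover have "cmod (qf P v) \<le> Re (qf P v) / cos \<alpha>" using sector_cmod[OF a] sec v by blast
    ultimately have "cmod e * Re (qf P v) \<le> (1 / cos \<alpha>) * Re (qf P v)" by simp
    thus ?thesis by (rule mult_right_le_imp_le) (use v(3) in simp)
  qed
  hence "prod_list (map cmod es) \<le> (1 / cos \<alpha>) ^ length (map cmod es)"
    by (intro prod_list_le_pow) auto
  thus "cmod (det P) \<le> Re (det Q) * (1 / cos \<alpha>) ^ p" unfolding cP len[symmetric] using dQ by simp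
qed



lemma sum_blocks: fixes n k :: nat shows "(\<Sum>r<n*k. g r) = (\<Sum>i<n. \<Sum>a<k. g (i*k+a))"
proof (induct n)
  case (Suc n)
  have "(\<Sum>r<Suc n * k. g r) = (\<Sum>r<n*k + k. g r)" by (simp add: add.commute)
  also have "\<dots> = sum g {0..<n*k} + sum g {n*k..<n*k+k}"
    by (simp add: sum.atLeastLessThan_concat lessThan_atLeast0)
  also have "sum g {n*k..<n*k+k} = (\<Sum>a<k. g (n*k+a))"
    by (subst sum.atLeastLessThan_shift_0) (simp add: lessThan_atLeast0)
  finally show ?case using Suc by (simp add: lessThan_atLeast0)
qed simp

lemma divk[simp]: "a < (k::nat) \<Longrightarrow> (i*k+a) div k = i" by simp
lemma modk[simp]: "a < (k::nat) \<Longrightarrow> (i*k+a) mod k = a" by simp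
lemma blk_lt: assumes "i < n" "a < (k::nat)" shows "i*k+a < n*k"
proof -
  have "(i+1)*k \<le> n*k" using assms by (intro mult_right_mono) auto
  thus ?thesis using assms by simp
qed

lemma decomp: fixes r n k :: nat assumes "r < n*k" shows "r = (r div k)*k + r mod k" "r div k < n" "r mod k < k"
proof -
  have k: "k > 0" using assms by (cases k) auto
  show "r = (r div k)*k + r mod k" by simp
  show "r div k < n" using assms k by (simp add: div_less_iff_less_mult)
  show "r mod k < k" using k by simp
qed

lemma ifz1[simp]: "(if P then x else 0) * (y::complex) = (if P then x * y else 0)" by simp
lemma ifz2[simp]: "(y::complex) * (if P then x else 0) = (if P then y * x else 0)" by simp
lemma sum_ifc[simp]: "(\<Sum>b\<in>S. if P then f b else (0::complex)) = (if P then sum f S else 0)" by simp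

definition bd :: "nat \<Rightarrow> nat \<Rightarrow> complex mat \<Rightarrow> complex mat" where
  "bd n k X = mat (n*k) (n*k) (\<lambda>(r,s). if r div k = s div k then X$$(r mod k, s mod k) else 0)"

lemma bd_carrier[simp]: "bd n k X \<in> carrier_mat (n*k) (n*k)" unfolding bd_def by auto
lemma bd_dim[simp]: "dim_row (bd n k X) = n*k" "dim_col (bd n k X) = n*k" unfolding bd_def by auto

lemma blk_inj: assumes "a < (k::nat)" "b < k" "i*k+a = j*k+b" shows "i = j" "a = b"
proof -
  show "i = j" using divk[OF assms(1), of i] divk[OF assms(2), of j] assms(3) by metis
  show "a = b" using modk[OF assms(1), of i] modk[OF assms(2), of j] assms(3) by metis
qed

lemma bd_idx: "i < n \<Longrightarrow> j < n \<Longrightarrow> a < k \<Longrightarrow> b < k \<Longrightarrow>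
  bd n k X $$ (i*k+a, j*k+b) = (if i = j then X$$(a,b) else 0)"
  unfolding bd_def by (simp add: blk_lt)

lemma bd_mult: assumes X: "X \<in> carrier_mat k k" and Y: "Y \<in> carrier_mat k k"
  shows "bd n k X * bd n k Y = bd n k (X * Y)"
proof (rule eq_matI)
  fix r s assume "r < dim_row (bd n k (X * Y))" "s < dim_col (bd n k (X * Y))"
  hence r: "r < n*k" and s: "s < n*k" by auto
  obtain i a where ia: "r = i*k+a" "i < n" "a < k" using decomp[OF r] by blast
  obtain j b where jb: "s = j*k+b" "j < n" "b < k" using decomp[OF s] by blast
  have "(bd n k X * bd n k Y) $$ (r,s) = (\<Sum>c<n*k. bd n k X $$ (r,c) * bd n k Y $$ (c,s))"
    using r s by (simp add: scalar_prod_def atLeast0LessThan)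
  also have "\<dots> = (\<Sum>j'<n. \<Sum>c<k. bd n k X $$ (i*k+a,j'*k+c) * bd n k Y $$ (j'*k+c,j*k+b))"
    unfolding sum_blocks ia jb ..
  also have "\<dots> = (\<Sum>j'<n. if j' = j then (if i = j then (\<Sum>c<k. X $$ (a,c) * Y $$ (c,b)) else 0) else 0)"
    using ia jb by (intro sum.cong) (auto simp: bd_idx)
  also have "\<dots> = (if i = j then \<Sum>c<k. X $$ (a,c) * Y $$ (c,b) else 0)"
    using jb by (simp add: sum.delta)
  also have "\<dots> = bd n k (X * Y) $$ (r,s)"
    using ia jb X Y by (simp add: bd_idx scalar_prod_def atLeast0LessThan)
  finally show "(bd n k X * bd n k Y) $$ (r,s) = bd n k (X * Y) $$ (r,s)" .
qed (auto simp: bd_def)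

lemma bd_one: "bd n k (1\<^sub>m k) = 1\<^sub>m (n*k)"
proof (rule eq_matI)
  fix r s assume "r < dim_row (1\<^sub>m (n*k))" "s < dim_col (1\<^sub>m (n*k) :: complex mat)"
  hence r: "r < n*k" and s: "s < n*k" by auto
  obtain i a where ia: "r = i*k+a" "i < n" "a < k" using decomp[OF r] by blast
  obtain j b where jb: "s = j*k+b" "j < n" "b < k" using decomp[OF s] by blast
  show "bd n k (1\<^sub>m k) $$ (r,s) = 1\<^sub>m (n*k) $$ (r,s)"
    using ia jb r s blk_inj[of a k b i j] by (auto simp: bd_idx)
qed (auto simp: bd_def)



lemma bd_Suc: assumes X: "X \<in> carrier_mat k k"
  shows "bd (Suc n) k X = four_block_mat X (0\<^sub>m k (n*k)) (0\<^sub>m (n*k) k) (bd n k X)"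
proof (rule eq_matI)
  fix r s assume "r < dim_row (four_block_mat X (0\<^sub>m k (n*k)) (0\<^sub>m (n*k) k) (bd n k X))"
    "s < dim_col (four_block_mat X (0\<^sub>m k (n*k)) (0\<^sub>m (n*k) k) (bd n k X))"
  hence r: "r < k + n*k" and s: "s < k + n*k" using X by auto
  show "bd (Suc n) k X $$ (r,s) = four_block_mat X (0\<^sub>m k (n*k)) (0\<^sub>m (n*k) k) (bd n k X) $$ (r,s)"
  proof (cases "r < k")
    case True note rk = this
    show ?thesis
    proof (cases "s < k")
      case True thus ?thesis using rk r s X unfolding bd_def by auto
    next
      case False
      hence "s div k \<noteq> 0" using rk by (simp add: div_eq_0_iff)
      thus ?thesis using rk False r s X unfolding bd_def by auto
    qed
  next
    case False note rk = this
    hence k: "k > 0" using r by (cases k) auto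
    have rd: "r div k = Suc ((r-k) div k)" "r mod k = (r-k) mod k"
      using rk k le_div_geq le_mod_geq by auto
    show ?thesis
    proof (cases "s < k")
      case True
      hence "s div k = 0" by auto
      thus ?thesis using rk True r s X rd unfolding bd_def by auto
    next
      case False
      have sd: "s div k = Suc ((s-k) div k)" "s mod k = (s-k) mod k"
        using False k le_div_geq le_mod_geq by auto
      show ?thesis using rk False r s X rd sd unfolding bd_def by auto
    qed
  qed
qed (use X in auto)

lemma det_bd: assumes X: "X \<in> carrier_mat k k" shows "det (bd n k X) = det X ^ n"
proof (induct n)
  case 0
  have "bd 0 k X = 1\<^sub>m 0" by (rule eq_matI) (auto simp: bd_def)
  thus ?case by simp
next
  case (Suc n)
  have "det (bd (Suc n) k X) = det X * det (bd n k X)"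
    unfolding bd_Suc[OF X]
    by (rule det_four_block_mat_lower_left_zero[OF X _ refl bd_carrier]) auto
  thus ?case using Suc by simp
qed



definition blk :: "nat \<Rightarrow> nat \<Rightarrow> complex vec \<Rightarrow> complex vec" where
  "blk k i v = vec k (\<lambda>a. v$(i*k+a))"

definition emb :: "nat \<Rightarrow> nat \<Rightarrow> nat \<Rightarrow> complex vec \<Rightarrow> complex vec" where
  "emb n k i x = vec (n*k) (\<lambda>r. if r div k = i then x$(r mod k) else 0)"

lemma blk_carrier[simp]: "blk k i v \<in> carrier_vec k" unfolding blk_def by auto
lemma emb_carrier[simp]: "emb n k i x \<in> carrier_vec (n*k)" unfolding emb_def by auto

lemma qf_bd: assumes X: "X \<in> carrier_mat k k" and v: "v \<in> carrier_vec (n*k)"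
  shows "qf (bd n k X) v = (\<Sum>i<n. qf X (blk k i v))"
proof -
  have "qf (bd n k X) v = (\<Sum>r<n*k. \<Sum>s<n*k. bd n k X $$ (r,s) * v$s * cnj (v$r))"
    by (rule qf_idx[OF bd_carrier v])
  also have "\<dots> = (\<Sum>i<n. \<Sum>a<k. \<Sum>j<n. \<Sum>b<k. bd n k X $$ (i*k+a,j*k+b) * v$(j*k+b) * cnj (v$(i*k+a)))"
    unfolding sum_blocks ..
  also have "\<dots> = (\<Sum>i<n. \<Sum>a<k. \<Sum>j<n. if j = i then (\<Sum>b<k. X $$ (a,b) * v$(i*k+b) * cnj (v$(i*k+a))) else 0)"
    by (intro sum.cong refl) (auto simp: bd_idx)
  also have "\<dots> = (\<Sum>i<n. \<Sum>a<k. \<Sum>b<k. X $$ (a,b) * v$(i*k+b) * cnj (v$(i*k+a)))"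
    by (simp add: sum.delta)
  also have "\<dots> = (\<Sum>i<n. qf X (blk k i v))"
    by (intro sum.cong refl, subst qf_idx[OF X blk_carrier]) (simp add: blk_def)
  finally show ?thesis .
qed

lemma blk_nonzero: assumes v: "v \<in> carrier_vec (n*k)" "v \<noteq> 0\<^sub>v (n*k)"
  shows "\<exists>i<n. blk k i v \<noteq> 0\<^sub>v k"
proof -
  obtain r where r: "r < n*k" "v$r \<noteq> 0" using v by (metis eq_vecI carrier_vecD index_zero_vec(1,2))
  obtain i a where ia: "r = i*k+a" "i < n" "a < k" using decomp[OF r(1)] by blast
  have "blk k i v $ a \<noteq> 0" using ia r unfolding blk_def by simp
  hence "blk k i v \<noteq> 0\<^sub>v k" using ia by auto
  thus ?thesis using ia by blast
qed

lemma emb_nonzero: assumes x: "x \<in> carrier_vec k" "x \<noteq> 0\<^sub>v k" and i: "i < n"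
  shows "emb n k i x \<noteq> 0\<^sub>v (n*k)"
proof -
  obtain a where a: "a < k" "x$a \<noteq> 0" using x by (metis eq_vecI carrier_vecD index_zero_vec(1,2))
  have "emb n k i x $ (i*k+a) \<noteq> 0" using a i blk_lt[OF i a(1)] unfolding emb_def by simp
  thus ?thesis using blk_lt[OF i a(1)] by auto
qed

lemma tr1_idx: "a < k \<Longrightarrow> b < k \<Longrightarrow> partial_trace1 n k H $$ (a,b) = (\<Sum>i<n. H $$ (i*k+a, i*k+b))"
  unfolding partial_trace1_def by simp

lemma tr1_carrier[simp]: "partial_trace1 n k H \<in> carrier_mat k k"
  unfolding partial_trace1_def by auto

lemma tr1_dim[simp]: "dim_row (partial_trace1 n k H) = k" "dim_col (partial_trace1 n k H) = k"
  unfolding partial_trace1_def by auto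

lemma qf_tr1: assumes A: "A \<in> carrier_mat (n*k) (n*k)" and x: "x \<in> carrier_vec k"
  shows "qf (partial_trace1 n k A) x = (\<Sum>i<n. qf A (emb n k i x))"
proof -
  have "qf (partial_trace1 n k A) x = (\<Sum>a<k. \<Sum>b<k. (\<Sum>i<n. A $$ (i*k+a, i*k+b)) * x$b * cnj (x$a))"
    by (subst qf_idx[OF tr1_carrier x]) (simp add: tr1_idx)
  also have "\<dots> = (\<Sum>a<k. \<Sum>b<k. \<Sum>i<n. A $$ (i*k+a, i*k+b) * x$b * cnj (x$a))"
    by (simp add: sum_distrib_right)
  also have "\<dots> = (\<Sum>a<k. \<Sum>i<n. \<Sum>b<k. A $$ (i*k+a, i*k+b) * x$b * cnj (x$a))"
    by (rule sum.cong[OF refl], rule sum.swap)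
  also have "\<dots> = (\<Sum>i<n. \<Sum>a<k. \<Sum>b<k. A $$ (i*k+a, i*k+b) * x$b * cnj (x$a))"
    by (rule sum.swap)
  also have "\<dots> = (\<Sum>i<n. qf A (emb n k i x))"
  proof (intro sum.cong refl)
    fix i assume i: "i \<in> {..<n}"
    have "qf A (emb n k i x) = (\<Sum>r<n*k. \<Sum>s<n*k. A $$ (r,s) * emb n k i x $ s * cnj (emb n k i x $ r))"
      by (rule qf_idx[OF A emb_carrier])
    also have "\<dots> = (\<Sum>i'<n. \<Sum>a<k. \<Sum>j<n. \<Sum>b<k. A $$ (i'*k+a,j*k+b) * emb n k i x $ (j*k+b) * cnj (emb n k i x $ (i'*k+a)))"
      unfolding sum_blocks ..
    also have "\<dots> = (\<Sum>i'<n. \<Sum>a<k. \<Sum>j<n. if j = i then (if i' = i then (\<Sum>b<k. A $$ (i*k+a,i*k+b) * x$b * cnj (x$a)) else 0) else 0)"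
      by (intro sum.cong refl) (auto simp: emb_def blk_lt)
    also have "\<dots> = (\<Sum>a<k. \<Sum>b<k. A $$ (i*k+a, i*k+b) * x$b * cnj (x$a))"
      using i by (simp add: sum.delta)
    finally show "(\<Sum>a<k. \<Sum>b<k. A $$ (i*k+a, i*k+b) * x$b * cnj (x$a)) = qf A (emb n k i x)" by simp
  qed
  finally show ?thesis .
qed

lemma mtrace_bd: assumes Y: "Y \<in> carrier_mat k k" and R: "R \<in> carrier_mat (n*k) (n*k)"
  shows "mtrace (bd n k Y * R) = mtrace (Y * partial_trace1 n k R)"
proof -
  have "mtrace (bd n k Y * R) = (\<Sum>r<n*k. \<Sum>c<n*k. bd n k Y $$ (r,c) * R $$ (c,r))"
    unfolding mtrace_def using R by (auto simp: scalar_prod_def atLeast0LessThan intro!: sum.cong)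
  also have "\<dots> = (\<Sum>i<n. \<Sum>a<k. \<Sum>j<n. \<Sum>b<k. bd n k Y $$ (i*k+a,j*k+b) * R $$ (j*k+b,i*k+a))"
    unfolding sum_blocks ..
  also have "\<dots> = (\<Sum>i<n. \<Sum>a<k. \<Sum>j<n. if j = i then (\<Sum>b<k. Y $$ (a,b) * R $$ (i*k+b,i*k+a)) else 0)"
    by (intro sum.cong refl) (auto simp: bd_idx)
  also have "\<dots> = (\<Sum>i<n. \<Sum>a<k. \<Sum>b<k. Y $$ (a,b) * R $$ (i*k+b,i*k+a))"
    by (simp add: sum.delta)
  also have "\<dots> = (\<Sum>a<k. \<Sum>i<n. \<Sum>b<k. Y $$ (a,b) * R $$ (i*k+b,i*k+a))"
    by (rule sum.swap)
  also have "\<dots> = (\<Sum>a<k. \<Sum>b<k. \<Sum>i<n. Y $$ (a,b) * R $$ (i*k+b,i*k+a))"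
    by (rule sum.cong[OF refl], rule sum.swap)
  also have "\<dots> = (\<Sum>a<k. \<Sum>b<k. Y $$ (a,b) * partial_trace1 n k R $$ (b,a))"
    by (intro sum.cong refl) (simp add: tr1_idx sum_distrib_left)
  also have "\<dots> = mtrace (Y * partial_trace1 n k R)"
    unfolding mtrace_def using Y carrier_matD[OF Y] by (auto simp: scalar_prod_def atLeast0LessThan intro!: sum.cong)
  finally show ?thesis .
qed


lemma tr1_herm: assumes H: "H \<in> carrier_mat (n*k) (n*k)"
  shows "partial_trace1 n k (herm H) = herm (partial_trace1 n k H)"
proof (rule eq_matI)
  fix a b assume "a < dim_row (herm (partial_trace1 n k H))" "b < dim_col (herm (partial_trace1 n k H))"
  hence a: "a < k" and b: "b < k" by (auto simp: herm_def)
  have "partial_trace1 n k (herm H) $$ (a,b) = (\<Sum>i<n. herm H $$ (i*k+a, i*k+b))" by (rule tr1_idx[OF a b])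
  also have "\<dots> = (\<Sum>i<n. (H $$ (i*k+a, i*k+b) + cnj (H $$ (i*k+b, i*k+a))) / 2)"
    using H a b by (intro sum.cong refl) (simp add: herm_def blk_lt)
  also have "\<dots> = herm (partial_trace1 n k H) $$ (a,b)"
    using a b by (simp add: herm_def tr1_idx sum.distrib sum_divide_distrib[symmetric] cnj_sum)
  finally show "partial_trace1 n k (herm H) $$ (a,b) = herm (partial_trace1 n k H) $$ (a,b)" .
qed (auto simp: herm_def)



lemma amgm_aux: assumes "\<forall>x\<in>set xs. (0::real) < x" "c > 0"
  shows "prod_list xs \<le> c ^ length xs * exp (sum_list xs / c - length xs)"
  using assms(1)
proof (induct xs)
  case Nil thus ?case by simp
next
  case (Cons a xs)
  have a: "a > 0" and IH: "prod_list xs \<le> c ^ length xs * exp (sum_list xs / c - length xs)"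
    using Cons by auto
  have "1 + (a/c - 1) \<le> exp (a/c - 1)" by (rule exp_ge_add_one_self)
  hence "a/c \<le> exp (a/c - 1)" by simp
  hence a1: "a \<le> c * exp (a/c - 1)" using assms(2) by (simp add: divide_le_eq mult.commute)
  have "prod_list (a # xs) = a * prod_list xs" by simp
  also have "\<dots> \<le> (c * exp (a/c - 1)) * (c ^ length xs * exp (sum_list xs / c - length xs))"
    using a1 IH a Cons(2) by (intro mult_mono) (auto intro: prod_list_nonneg less_imp_le)
  also have "\<dots> = c ^ length (a # xs) * (exp (a/c - 1) * exp (sum_list xs / c - length xs))"
    by simp
  also have "exp (a/c - 1) * exp (sum_list xs / c - length xs) = exp (sum_list (a # xs) / c - length (a # xs))"
    by (simp add: exp_add[symmetric] add_divide_distrib)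
  finally show ?case .
qed

lemma amgm: fixes c :: real assumes "\<forall>x\<in>set xs. (0::real) < x" "c > 0" "sum_list xs = c * length xs"
  shows "prod_list xs \<le> c ^ length xs"
  using amgm_aux[OF assms(1,2)] assms(2,3) by simp



lemma qf_zero: "Q \<in> carrier_mat p p \<Longrightarrow> qf Q (0\<^sub>v p) = 0"
  unfolding qf_def by simp

lemma psd_qf: assumes Q: "Q \<in> carrier_mat p p" and pd: "pd p Q" and w: "w \<in> carrier_vec p"
  shows "Im (qf Q w) = 0 \<and> Re (qf Q w) \<ge> 0"
proof (cases "w = 0\<^sub>v p")
  case True thus ?thesis using qf_zero[OF Q] by simp
next
  case False thus ?thesis using pd w unfolding pd_def by (meson less_imp_le)
qed

lemma sum_list_real: "(\<forall>e\<in>set es. Im e = 0) \<Longrightarrow> sum_list es = of_real (sum_list (map Re es))"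
  by (induct es) (auto simp: complex_eq_iff)

lemma mtrace_one: "mtrace (1\<^sub>m k) = of_nat k"
  unfolding mtrace_def by simp

lemma det_fischer: assumes n: "n \<ge> 1" and R: "R \<in> carrier_mat (n*k) (n*k)" and pdR: "pd (n*k) R"
  and pdS: "pd k (partial_trace1 n k R)"
  shows "Re (det R) \<le> (Re (det (partial_trace1 n k R)) / real n ^ k) ^ n"
proof -
  define S where "S = partial_trace1 n k R"
  have S: "S \<in> carrier_mat k k" unfolding S_def by simp
  have pdS': "pd k S" using pdS unfolding S_def .
  obtain Si where Si: "Si \<in> carrier_mat k k" and SiS: "Si * S = 1\<^sub>m k" and SSi: "S * Si = 1\<^sub>m k"
    using pd_inv[OF S pdS'] by blast
  define D where "D = bd n k S"
  define Di where "Di = bd n k Si"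
  have D: "D \<in> carrier_mat (n*k) (n*k)" and Di: "Di \<in> carrier_mat (n*k) (n*k)" unfolding D_def Di_def by auto
  have DDi: "D * Di = 1\<^sub>m (n*k)" unfolding D_def Di_def bd_mult[OF S Si] SSi bd_one ..
  define M where "M = Di * R"
  have M: "M \<in> carrier_mat (n*k) (n*k)" unfolding M_def using Di R by auto
  obtain es where len: "length es = n*k" and dM: "det M = prod_list es" and tM: "mtrace M = sum_list es"
    and ev: "\<forall>e\<in>set es. \<exists>v. v \<in> carrier_vec (n*k) \<and> v \<noteq> 0\<^sub>v (n*k) \<and> M *\<^sub>v v = e \<cdot>\<^sub>v v"
    using eig_decomp[OF M] by blast
  have trM: "mtrace M = of_nat k" unfolding M_def Di_def mtrace_bd[OF Si R] S_def[symmetric] SiS mtrace_one ..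
  have DM: "D * M = R" unfolding M_def
    by (subst assoc_mult_mat[symmetric, OF D Di R]) (simp add: DDi left_mult_one_mat[OF R])
  have epos: "Im e = 0 \<and> Re e > 0" if e: "e \<in> set es" for e
  proof -
    obtain v where v: "v \<in> carrier_vec (n*k)" "v \<noteq> 0\<^sub>v (n*k)" "M *\<^sub>v v = e \<cdot>\<^sub>v v" using ev e by blast
    have "R *\<^sub>v v = D *\<^sub>v (M *\<^sub>v v)" unfolding DM[symmetric] by (rule assoc_mult_mat_vec[OF D M v(1)])
    also have "\<dots> = e \<cdot>\<^sub>v (D *\<^sub>v v)" using v D by (simp add: mult_mat_vec)
    finally have "qf R v = e * qf D v" by (rule qf_eigen[OF R D v(1)])
    moreover have qR: "Im (qf R v) = 0 \<and> Re (qf R v) > 0" using pdR v unfolding pd_def by blast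
    moreover have qD: "Im (qf D v) = 0 \<and> Re (qf D v) > 0"
    proof -
      have eq: "qf D v = (\<Sum>i<n. qf S (blk k i v))" unfolding D_def by (rule qf_bd[OF S v(1)])
      have each: "Im (qf S (blk k i v)) = 0 \<and> Re (qf S (blk k i v)) \<ge> 0" for i
        by (rule psd_qf[OF S pdS' blk_carrier])
      obtain i0 where i0: "i0 < n" "blk k i0 v \<noteq> 0\<^sub>v k" using blk_nonzero[OF v(1,2)] by blast
      have pos: "Re (qf S (blk k i0 v)) > 0" using pdS' i0 unfolding pd_def by auto
      have "Im (qf D v) = (\<Sum>i<n. Im (qf S (blk k i v)))" unfolding eq by (simp add: Im_sum)
      also have "\<dots> = 0" using each by simp
      finally have im: "Im (qf D v) = 0" .
      have "Re (qf S (blk k i0 v)) \<le> (\<Sum>i<n. Re (qf S (blk k i v)))"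
        using i0 each by (intro member_le_sum) auto
      hence "Re (qf D v) > 0" unfolding eq Re_sum using pos by linarith
      with im show ?thesis by simp
    qed
    ultimately have eqn: "qf R v = e * of_real (Re (qf D v))" by (simp add: complex_eq_iff)
    have "Re (qf D v) \<noteq> 0" using qD by simp
    hence "e = qf R v / of_real (Re (qf D v))" unfolding eqn by simp
    thus ?thesis using qR qD by (simp add: Re_divide_of_real Im_divide_of_real)
  qed
  define rs where "rs = map Re es"
  have rpos: "\<forall>x\<in>set rs. 0 < x" unfolding rs_def using epos by auto
  have prs: "det M = of_real (prod_list rs)" unfolding dM rs_def using prod_list_real epos by blast
  have "of_nat k = (of_real (sum_list rs) :: complex)" unfolding trM[symmetric] tM rs_def using sum_list_real epos by blast
  hence "Re (of_nat k) = Re (of_real (sum_list rs) :: complex)" by (rule arg_cong)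
  hence sk: "sum_list rs = real k" by simp
  have nz: "real n \<noteq> 0" using n by simp
  have srs: "sum_list rs = (1 / real n) * real (length rs)"
    using sk nz unfolding rs_def by (simp add: len)
  have amg: "prod_list rs \<le> (1 / real n) ^ (n*k)"
    using amgm[OF rpos _ srs] n unfolding rs_def by (simp add: len)
  have dR: "Im (det R) = 0" "Re (det R) > 0" using pd_det[OF R pdR] by auto
  have dS: "Im (det S) = 0" "Re (det S) > 0" using pd_det[OF S pdS'] by auto
  have dR': "det R = of_real (Re (det R))" using dR by (simp add: complex_eq_iff)
  have dS': "det S = of_real (Re (det S))" using dS by (simp add: complex_eq_iff)
  have "det Si * det S = 1" using det_mult[OF Si S] SiS by simp
  moreover have "det S \<noteq> 0" using dS by auto
  ultimately have "det Si = 1 / det S" by (simp add: eq_divide_eq)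
  hence dSi: "det Si = of_real (1 / Re (det S))" by (subst (asm) dS') simp
  have "det M = det Di * det R" unfolding M_def by (rule det_mult[OF Di R])
  also have "det Di = det Si ^ n" unfolding Di_def by (rule det_bd[OF Si])
  finally have "of_real (prod_list rs) = (of_real (1 / Re (det S)) ^ n * of_real (Re (det R)) :: complex)"
    unfolding prs dSi by (subst (asm) dR') simp
  also have "\<dots> = of_real ((1 / Re (det S)) ^ n * Re (det R))" by simp
  finally have eq: "prod_list rs = (1 / Re (det S)) ^ n * Re (det R)" by (simp only: of_real_eq_iff)
  have "Re (det R) = Re (det S) ^ n * ((1 / Re (det S)) ^ n * Re (det R))"
    using dS by (simp add: power_one_over)
  also have "\<dots> \<le> Re (det S) ^ n * (1 / real n) ^ (n*k)"
    using amg eq dS by (intro mult_left_mono) auto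
  also have "\<dots> = (Re (det S) / real n ^ k) ^ n"
    by (simp add: power_divide power_mult[symmetric] mult.commute power_one_over)
  finally show ?thesis unfolding S_def .
qed



theorem theorem3p5:
  fixes n k :: nat and \<alpha> :: real and H :: "complex mat"
  assumes "n \<ge> 1" and "k \<ge> 1"
    and "0 \<le> \<alpha>" and "\<alpha> < pi / 2"
    and "H \<in> carrier_mat (n * k) (n * k)"
    and "numerical_range H \<subseteq> sector \<alpha>"
  shows "cmod (det (partial_trace1 n k H) / of_nat (n ^ k)) ^ n
           \<ge> (cos \<alpha>) ^ (n * k) * cmod (det H)"
proof -
  note n = assms(1) and a = assms(3,4) and H = assms(5) and W = assms(6)
  have Hsec: "qf H v \<in> sector \<alpha>" if "v \<in> carrier_vec (n*k)" "v \<noteq> 0\<^sub>v (n*k)" for v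
    by (rule sector_qf[OF H W that])
  define R where "R = herm H"
  have R: "R \<in> carrier_mat (n*k) (n*k)" unfolding R_def using H by simp
  have qR: "qf R v = of_real (Re (qf H v))" if "v \<in> carrier_vec (n*k)" for v
    unfolding R_def by (rule qf_herm[OF H that])
  have pdR: "pd (n*k) R" unfolding pd_def
  proof (intro allI impI)
    fix v :: "complex vec" assume "v \<in> carrier_vec (n*k)" "v \<noteq> 0\<^sub>v (n*k)"
    thus "Im (qf R v) = 0 \<and> Re (qf R v) > 0" using qR Hsec unfolding sector_def by auto
  qed
  define P where "P = partial_trace1 n k H"
  have P: "P \<in> carrier_mat k k" unfolding P_def by simp
  define S where "S = herm P"
  have S: "S \<in> carrier_mat k k" unfolding S_def using P by simp
  have SR: "partial_trace1 n k R = S" unfolding S_def P_def R_def by (rule tr1_herm[OF H])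
  have qS: "qf S v = of_real (Re (qf P v))" if "v \<in> carrier_vec k" for v
    unfolding S_def by (rule qf_herm[OF P that])
  have pdS: "pd k S" unfolding pd_def
  proof (intro allI impI)
    fix v :: "complex vec" assume v: "v \<in> carrier_vec k" "v \<noteq> 0\<^sub>v k"
    have "Re (qf P v) = (\<Sum>i<n. Re (qf H (emb n k i v)))"
      unfolding P_def qf_tr1[OF H v(1)] Re_sum ..
    also have "\<dots> > 0"
    proof (rule sum_pos)
      show "{..<n} \<noteq> {}" using n by (auto simp: lessThan_empty_iff)
      fix i assume "i \<in> {..<n}"
      hence "qf H (emb n k i v) \<in> sector \<alpha>" using Hsec emb_nonzero[OF v] by auto
      thus "Re (qf H (emb n k i v)) > 0" unfolding sector_def by auto
    qed simp
    finally show "Im (qf S v) = 0 \<and> Re (qf S v) > 0" using qS[OF v(1)] by simp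
  qed
  have low: "Re (det S) \<le> cmod (det P)"
    using det_bounds(1)[OF P S pdS] qS by blast
  have up: "cmod (det H) \<le> Re (det R) * (1 / cos \<alpha>) ^ (n*k)"
    using det_bounds(2)[OF H R pdR _ a] qR Hsec by blast
  have fis: "Re (det R) \<le> (Re (det S) / real n ^ k) ^ n"
    using det_fischer[OF n R pdR] pdS unfolding SR by blast
  have c: "cos \<alpha> > 0" using a by (intro cos_gt_zero_pi) auto
  have dS: "Re (det S) > 0" using pd_det[OF S pdS] by auto
  have "cos \<alpha> ^ (n*k) * cmod (det H) \<le> cos \<alpha> ^ (n*k) * (Re (det R) * (1 / cos \<alpha>) ^ (n*k))"
    using up c by (intro mult_left_mono) auto
  also have "\<dots> = Re (det R)" using c by (simp add: power_one_over)
  also have "\<dots> \<le> (Re (det S) / real n ^ k) ^ n" by (rule fis)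
  also have "\<dots> \<le> (cmod (det P) / real n ^ k) ^ n"
    using low dS n by (intro power_mono divide_right_mono) auto
  also have "\<dots> = cmod (det P / of_nat (n ^ k)) ^ n"
    by (simp add: norm_divide norm_power)
  finally show ?thesis unfolding P_def .
qed

end
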